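(* Let $\eta\in\mathbb{R}$, $h>0$, $x_0\in\mathbb{R}$, and let $(\Delta W_n)_{n\ge0}$ be i.i.d. $\mathcal{N}(0,h)$ random variables. For $f(x)=-x$, $g(x)=1+\eta x$ and $F(x)=f(x)-\tfrac12g'(x)g(x)=-x-\tfrac12\eta(1+\eta x)$, define the stochastic Heun iterates $$x_{n+1}=x_n+\tfrac12(F_1+F_2)h+\tfrac12(G_1+G_2)\Delta W_n,$$ where $F_1=F(x_n)$, $G_1=g(x_n)$, $F_2=F(x_n+F_1h+G_1\Delta W_n)$, $G_2=g(x_n+F_1h+G_1\Delta W_n)$, starting from the deterministic value $x_0$. Let $\mu^{(1)}_n=\mathbb{E}[x_n]$. Then $$\mu^{(1)}_{n+1}=\Big(1-h+\tfrac18h^2(2+\eta^2)^2\Big)\mu^{(1)}_n+\tfrac18\eta h^2(2+\eta^2).$$ Consequently, if $0<h<\dfrac{8}{(2+\eta^2)^2}$, then $$\mu^{(1)}_n\to\frac{\frac18\eta h(2+\eta^2)}{1-\frac18h(2+\eta^2)^2}\quad(n\to\infty),$$ which is $O(h)$ as $h\to0$.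
   Context: Here $\Delta W_n$ is independent of $x_0,\dots,x_n$. *)

theory Defs
  imports "HOL-Probability.Probability"
begin

definition heun_f :: "real \<Rightarrow> real" where
  "heun_f x = - x"

definition heun_g :: "real \<Rightarrow> real \<Rightarrow> real" where
  "heun_g eta x = 1 + eta * x"

definition heun_F :: "real \<Rightarrow> real \<Rightarrow> real" where
  "heun_F eta x = heun_f x - 1/2 * deriv (heun_g eta) x * heun_g eta x"

definition heun_step :: "real \<Rightarrow> real \<Rightarrow> real \<Rightarrow> real \<Rightarrow> real" where
  "heun_step eta h x w =
     (let F1 = heun_F eta x; G1 = heun_g eta x;
          y = x + F1 * h + G1 * w;
          F2 = heun_F eta y; G2 = heun_g eta y
      in x + 1/2 * (F1 + F2) * h + 1/2 * (G1 + G2) * w)"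

fun heun_iter :: "real \<Rightarrow> real \<Rightarrow> real \<Rightarrow> (nat \<Rightarrow> 'a \<Rightarrow> real) \<Rightarrow> nat \<Rightarrow> 'a \<Rightarrow> real" where
  "heun_iter eta h x0 dW 0 \<omega> = x0"
| "heun_iter eta h x0 dW (Suc n) \<omega> = heun_step eta h (heun_iter eta h x0 dW n \<omega>) (dW n \<omega>)"

end

theory Submission
  imports Defs
begin

lemma deriv_g: "deriv (heun_g eta) x = eta"
  unfolding heun_g_def
  by (rule DERIV_imp_deriv) (auto intro!: derivative_eq_intros)

lemma step_poly:
  "heun_step eta h x w =
     ((-(eta/2)*(h - (1 + eta^2/2)*h^2/2)) + (1 - (1 + eta^2/2)*h + (1 + eta^2/2)^2*h^2/2) * x)
     + ((1 - (1 + eta^2/2)*h/2 - eta^2*h/4) + eta*(1 - (1 + eta^2/2)*h) * x) * w ^ 1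
     + (eta/2 + eta^2/2 * x) * w ^ 2"
  unfolding heun_step_def heun_F_def heun_f_def deriv_g Let_def
  by (simp add: heun_g_def power2_eq_square field_simps)

lemma iter_cong:
  "(\<And>i. i < n \<Longrightarrow> dW i \<omega> = dW' i \<omega>') \<Longrightarrow>
   heun_iter eta h x0 dW n \<omega> = heun_iter eta h x0 dW' n \<omega>'"
  by (induction n) auto

lemma iter_meas:
  "(\<And>i. i < n \<Longrightarrow> dW i \<in> borel_measurable N) \<Longrightarrow>
   heun_iter eta h x0 dW n \<in> borel_measurable N"
proof (induction n)
  case 0
  then show ?case by simp
next
  case (Suc n)
  then have [measurable]: "heun_iter eta h x0 dW n \<in> borel_measurable N" "dW n \<in> borel_measurable N"
    by auto
  show ?case by (simp add: step_poly) measurable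
qed

lemma (in prob_space) indep_aff:
  fixes X W :: "'a \<Rightarrow> real"
  assumes ind: "indep_var borel X borel W" and iX: "integrable M X"
    and iW: "integrable M (\<lambda>\<omega>. W \<omega> ^ k)"
  shows "integrable M (\<lambda>\<omega>. (a + b * X \<omega>) * W \<omega> ^ k)"
    and "expectation (\<lambda>\<omega>. (a + b * X \<omega>) * W \<omega> ^ k)
           = (a + b * expectation X) * expectation (\<lambda>\<omega>. W \<omega> ^ k)"
proof -
  have "indep_var borel ((\<lambda>x. a + b * x) \<circ> X) borel ((\<lambda>w. w ^ k) \<circ> W)"
    by (rule indep_var_compose[OF ind]) auto
  then have ind2: "indep_var borel (\<lambda>\<omega>. a + b * X \<omega>) borel (\<lambda>\<omega>. W \<omega> ^ k)"
    by (simp add: comp_def)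
  have iA: "integrable M (\<lambda>\<omega>. a + b * X \<omega>)" using iX by auto
  show "integrable M (\<lambda>\<omega>. (a + b * X \<omega>) * W \<omega> ^ k)"
    by (rule indep_var_integrable[OF ind2 iA iW])
  have "expectation (\<lambda>\<omega>. (a + b * X \<omega>) * W \<omega> ^ k)
     = expectation (\<lambda>\<omega>. a + b * X \<omega>) * expectation (\<lambda>\<omega>. W \<omega> ^ k)"
    by (rule indep_var_lebesgue_integral[OF ind2 iA iW])
  also have "expectation (\<lambda>\<omega>. a + b * X \<omega>) = a + b * expectation X"
    using iX by (simp add: prob_space)
  finally show "expectation (\<lambda>\<omega>. (a + b * X \<omega>) * W \<omega> ^ k)
           = (a + b * expectation X) * expectation (\<lambda>\<omega>. W \<omega> ^ k)" .
qed

lemma (in prob_space) iter_indep: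
  assumes ind: "indep_vars (\<lambda>_. borel) dW UNIV"
  shows "indep_var borel (heun_iter eta h x0 dW n) borel (dW n)"
proof -
  have "indep_var (PiM {..<n} (\<lambda>_. borel)) (\<lambda>\<omega>. restrict (\<lambda>i. dW i \<omega>) {..<n})
                  (PiM {n} (\<lambda>_. borel)) (\<lambda>\<omega>. restrict (\<lambda>i. dW i \<omega>) {n})"
    by (rule indep_var_restrict[OF ind]) auto
  then have "indep_var borel ((\<lambda>f. heun_iter eta h x0 (\<lambda>i f. f i) n f) \<circ> (\<lambda>\<omega>. restrict (\<lambda>i. dW i \<omega>) {..<n}))
                  borel ((\<lambda>f. f n) \<circ> (\<lambda>\<omega>. restrict (\<lambda>i. dW i \<omega>) {n}))"
    by (rule indep_var_compose) (auto intro!: iter_meas measurable_component_singleton)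
  moreover have "((\<lambda>f. heun_iter eta h x0 (\<lambda>i f. f i) n f) \<circ> (\<lambda>\<omega>. restrict (\<lambda>i. dW i \<omega>) {..<n}))
      = heun_iter eta h x0 dW n"
    by (rule ext) (simp add: comp_def, rule iter_cong, simp)
  moreover have "((\<lambda>f. f n) \<circ> (\<lambda>\<omega>. restrict (\<lambda>i. dW i \<omega>) {n})) = dW n"
    by (rule ext) simp
  ultimately show ?thesis by simp
qed

lemma (in prob_space) recur:
  assumes hpos: "h > 0"
    and ind: "indep_vars (\<lambda>_. borel) dW UNIV"
    and D: "\<And>n. distributed M lborel (dW n) (\<lambda>x. ennreal (normal_density 0 (sqrt h) x))"
  shows "integrable M (heun_iter eta h x0 dW n) \<and>
     expectation (heun_iter eta h x0 dW (Suc n))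
            = (1 - h + 1/8 * h^2 * (2 + eta^2)^2) * expectation (heun_iter eta h x0 dW n)
              + 1/8 * eta * h^2 * (2 + eta^2)"
proof -
  have sh: "sqrt h > 0" using hpos by simp
  have Wint: "integrable M (\<lambda>\<omega>. dW m \<omega> ^ k)" for m k
    using distributed_integrable[OF D[of m], of "\<lambda>x. x ^ k"]
      integrable_normal_moment[where \<mu>=0 and \<sigma>="sqrt h" and k=k] hpos by simp
  have W1: "expectation (\<lambda>\<omega>. dW m \<omega> ^ 1) = 0" for m
    using normal_distributed_expectation[OF sh D[of m]] by simp
  have W2: "expectation (\<lambda>\<omega>. dW m \<omega> ^ 2) = h" for m
    using distributed_integral[OF D[of m], of "\<lambda>x. x ^ 2"]
      integral_normal_moment_even[of "sqrt h" 0 1] hpos by simp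
  have step: "integrable M (heun_iter eta h x0 dW (Suc m)) \<and>
     expectation (heun_iter eta h x0 dW (Suc m))
            = (1 - h + 1/8 * h^2 * (2 + eta^2)^2) * expectation (heun_iter eta h x0 dW m)
              + 1/8 * eta * h^2 * (2 + eta^2)"
    if iX: "integrable M (heun_iter eta h x0 dW m)" for m
  proof -
    let ?X = "heun_iter eta h x0 dW m"
    have I: "indep_var borel ?X borel (dW m)" by (rule iter_indep[OF ind])
    define p0 where "p0 = -(eta/2)*(h - (1 + eta^2/2)*h^2/2)"
    define p1 where "p1 = 1 - (1 + eta^2/2)*h + (1 + eta^2/2)^2*h^2/2"
    define q0 where "q0 = 1 - (1 + eta^2/2)*h/2 - eta^2*h/4"
    define q1 where "q1 = eta*(1 - (1 + eta^2/2)*h)"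
    define r0 where "r0 = eta/2"
    define r1 where "r1 = eta^2/2"
    have eq: "heun_iter eta h x0 dW (Suc m) = (\<lambda>\<omega>. (p0 + p1 * ?X \<omega>)
       + (q0 + q1 * ?X \<omega>) * dW m \<omega> ^ 1 + (r0 + r1 * ?X \<omega>) * dW m \<omega> ^ 2)"
      by (rule ext) (simp only: heun_iter.simps step_poly p0_def p1_def q0_def q1_def r0_def r1_def)
    have i0: "integrable M (\<lambda>\<omega>. p0 + p1 * ?X \<omega>)" using iX by auto
    note i1 = indep_aff(1)[OF I iX Wint[of m 1], where a=q0 and b=q1]
    note i2 = indep_aff(1)[OF I iX Wint[of m 2], where a=r0 and b=r1]
    note e1 = indep_aff(2)[OF I iX Wint[of m 1], where a=q0 and b=q1]
    note e2 = indep_aff(2)[OF I iX Wint[of m 2], where a=r0 and b=r1]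
    have e0: "expectation (\<lambda>\<omega>. p0 + p1 * ?X \<omega>) = p0 + p1 * expectation ?X"
      using iX by (simp add: prob_space)
    have "integrable M (heun_iter eta h x0 dW (Suc m))"
      unfolding eq using i0 i1 i2 by auto
    moreover have "expectation (heun_iter eta h x0 dW (Suc m))
        = p0 + p1 * expectation ?X + (r0 + r1 * expectation ?X) * h"
      unfolding eq using i0 i1 i2 e0 e1 e2 W1 W2 by simp
    moreover have "p0 + p1 * expectation ?X + (r0 + r1 * expectation ?X) * h
        = (1 - h + 1/8 * h^2 * (2 + eta^2)^2) * expectation ?X + 1/8 * eta * h^2 * (2 + eta^2)"
      unfolding p0_def p1_def r0_def r1_def by (simp add: power2_eq_square field_simps)
    ultimately show ?thesis by simp
  qed
  have int: "integrable M (heun_iter eta h x0 dW m)" for m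
  proof (induction m)
    case 0 then show ?case by simp
  next
    case (Suc m) then show ?case using step by blast
  qed
  show ?thesis using int step by blast
qed

lemma lin_rec_lim:
  fixes mu :: "nat \<Rightarrow> real"
  assumes rec: "\<And>n. mu (Suc n) = r * mu n + c" and r: "\<bar>r\<bar> < 1" and L: "L = r * L + c"
  shows "mu \<longlonglongrightarrow> L"
proof -
  define m0 where "m0 = mu 0"
  have eq: "mu n = L + r ^ n * (m0 - L)" for n
  proof (induction n)
    case 0 then show ?case by (simp add: m0_def)
  next
    case (Suc n)
    have "mu (Suc n) = r * (L + r ^ n * (m0 - L)) + c" using rec Suc by simp
    also have "\<dots> = (r * L + c) + r ^ Suc n * (m0 - L)" by (simp add: algebra_simps)
    also have "\<dots> = L + r ^ Suc n * (m0 - L)" using L by linarith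
    finally show ?case .
  qed
  have p: "(\<lambda>n. r ^ n) \<longlonglongrightarrow> 0" using r by (intro LIMSEQ_power_zero) simp
  have "(\<lambda>n. L + r ^ n * (m0 - L)) \<longlonglongrightarrow> L + 0"
    by (rule tendsto_add[OF tendsto_const tendsto_mult_left_zero[OF p]])
  moreover have "mu = (\<lambda>n. L + r ^ n * (m0 - L))" using eq by (intro ext)
  ultimately show ?thesis by simp
qed

lemma b4: "(2 + eta^2)^2 \<ge> (4::real)"
proof -
  have "2 + eta^2 \<ge> 2" by simp
  then have "2^2 \<le> (2 + eta^2)^2" by (intro power_mono) auto
  then show ?thesis by simp
qed
lemma A: fixes h b :: real assumes "h>0" "b \<ge> 4" "h*b < 8"
  shows "\<bar>1 - h + 1/8 * h^2 * b\<bar> < 1"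
proof -
  have d: "1 - 1/8 * h * b > 0" using assms by simp
  have "h * (1 - 1/8 * h * b) \<le> h * (1 - h/2)"
    using assms by (intro mult_left_mono) auto
  moreover have "h * (1 - h/2) \<le> 1/2"
    using zero_le_power2 [of "h - 1"] by (simp add: power2_eq_square algebra_simps)
  moreover have "h * (1 - 1/8 * h * b) > 0" using d assms by simp
  moreover have "1 - h + 1/8 * h^2 * b = 1 - h * (1 - 1/8 * h * b)"
    by (simp add: power2_eq_square algebra_simps)
  ultimately show ?thesis by linarith
qed
lemma B: fixes h b e c :: real assumes "1 - 1/8 * h * b > 0"
  shows "(1/8 * e * h * c) / (1 - 1/8 * h * b) =
      (1 - h + 1/8 * h^2 * b) * ((1/8 * e * h * c) / (1 - 1/8 * h * b))
      + 1/8 * e * h^2 * c"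
  using assms by (simp add: field_simps power2_eq_square)

lemma bigO_aux:
  fixes e c b :: real assumes bp: "b > 0"
  shows "(\<lambda>k::real. (1/8 * e * k * c) / (1 - 1/8 * k * b)) \<in> O[at_right 0](\<lambda>k. k)"
proof (rule bigoI[where c = "2 * \<bar>1/8 * e * c\<bar>"])
  have "eventually (\<lambda>k. k \<in> {0<..<4 / b}) (at_right (0::real))"
    using bp by (intro eventually_at_right_real) simp
  then show "eventually (\<lambda>k. norm ((1/8 * e * k * c) / (1 - 1/8 * k * b))
      \<le> 2 * \<bar>1/8 * e * c\<bar> * norm k) (at_right 0)"
  proof (rule eventually_mono)
    fix k :: real assume k: "k \<in> {0<..<4 / b}"
    then have kb: "k * b < 4" using bp by (simp add: field_simps)
    have d: "1 - 1/8 * k * b \<ge> 1/2" using kb by (simp add: mult.commute)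
    have "norm ((1/8 * e * k * c) / (1 - 1/8 * k * b))
        = \<bar>1/8 * e * c\<bar> * \<bar>k\<bar> / (1 - 1/8 * k * b)"
    proof -
      have ad: "\<bar>1 - 1/8 * k * b\<bar> = 1 - 1/8 * k * b" using d by (intro abs_of_nonneg) linarith
      show ?thesis unfolding real_norm_def abs_divide ad by (simp add: abs_mult mult_ac)
    qed
    also have "\<dots> \<le> \<bar>1/8 * e * c\<bar> * \<bar>k\<bar> / (1/2)"
      using d by (intro divide_left_mono) (auto simp: mult.commute)
    finally show "norm ((1/8 * e * k * c) / (1 - 1/8 * k * b))
      \<le> 2 * \<bar>1/8 * e * c\<bar> * norm k" by (simp add: mult.commute)
  qed
qed

theorem mainTheorem6:
  fixes M :: "'a measure" and eta h x0 :: real and dW :: "nat \<Rightarrow> 'a \<Rightarrow> real"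
  assumes "prob_space M"
    and "h > 0"
    and "prob_space.indep_vars M (\<lambda>_. borel) dW UNIV"
    and "\<And>n. distributed M lborel (dW n) (\<lambda>x. ennreal (normal_density 0 (sqrt h) x))"
  shows "(\<forall>n. prob_space.expectation M (heun_iter eta h x0 dW (Suc n))
            = (1 - h + 1/8 * h^2 * (2 + eta^2)^2) * prob_space.expectation M (heun_iter eta h x0 dW n)
              + 1/8 * eta * h^2 * (2 + eta^2))
       \<and> (h < 8 / (2 + eta^2)^2 \<longrightarrow>
            (\<lambda>n. prob_space.expectation M (heun_iter eta h x0 dW n))
              \<longlonglongrightarrow> (1/8 * eta * h * (2 + eta^2)) / (1 - 1/8 * h * (2 + eta^2)^2))
       \<and> (\<lambda>k::real. (1/8 * eta * k * (2 + eta^2)) / (1 - 1/8 * k * (2 + eta^2)^2))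
            \<in> O[at_right 0](\<lambda>k. k)"
proof -
  interpret prob_space M by fact
  have R: "\<forall>n. expectation (heun_iter eta h x0 dW (Suc n))
            = (1 - h + 1/8 * h^2 * (2 + eta^2)^2) * expectation (heun_iter eta h x0 dW n)
              + 1/8 * eta * h^2 * (2 + eta^2)"
    using recur[OF assms(2,3,4)] by blast
  have b4: "(2 + eta^2)^2 \<ge> (4::real)" by (rule b4)
  have C: "(\<lambda>n. expectation (heun_iter eta h x0 dW n))
              \<longlonglongrightarrow> (1/8 * eta * h * (2 + eta^2)) / (1 - 1/8 * h * (2 + eta^2)^2)"
    if hb: "h < 8 / (2 + eta^2)^2"
  proof (rule lin_rec_lim)
    show "\<And>n. expectation (heun_iter eta h x0 dW (Suc n))
            = (1 - h + 1/8 * h^2 * (2 + eta^2)^2) * expectation (heun_iter eta h x0 dW n)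
              + 1/8 * eta * h^2 * (2 + eta^2)" using R by blast
    have bp: "(2 + eta^2)^2 > (0::real)" using b4 by linarith
    have hb': "h * (2 + eta^2)^2 < 8" using hb pos_less_divide_eq[OF bp] by blast
    show "\<bar>1 - h + 1/8 * h^2 * (2 + eta^2)^2\<bar> < 1"
      by (rule A[OF assms(2) b4 hb'])
    have d: "1 - 1/8 * h * (2 + eta^2)^2 > 0" using hb' by simp
    show "(1/8 * eta * h * (2 + eta^2)) / (1 - 1/8 * h * (2 + eta^2)^2) =
      (1 - h + 1/8 * h^2 * (2 + eta^2)^2) * ((1/8 * eta * h * (2 + eta^2)) / (1 - 1/8 * h * (2 + eta^2)^2))
      + 1/8 * eta * h^2 * (2 + eta^2)"
      by (rule B[OF d])
  qed
  have O: "(\<lambda>k::real. (1/8 * eta * k * (2 + eta^2)) / (1 - 1/8 * k * (2 + eta^2)^2))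
            \<in> O[at_right 0](\<lambda>k. k)"
    by (rule bigO_aux) (use b4 in linarith)
  show ?thesis using R C O by blast
qed

end
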